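(* Let $A\subset\Pi$, $\alpha_i\in\Pi\setminus A$ and $\epsilon=(\epsilon_1,\dots,\epsilon_l)\in\mathcal E^A$. (a) If $\epsilon_i=1$ then $s_{\alpha_i}h_\epsilon=h_\epsilon$. If $\epsilon_i=-1$ then $s_{\alpha_i}h_\epsilon=h_{\epsilon'}$ with $\epsilon'_j=\epsilon_j\epsilon_i^{-C_{j,i}}$; moreover $h_{\epsilon'}$ factors as $h_{\epsilon'}=\big(\prod_{\alpha_j\in A,\ C_{j,i}\text{ odd}}h_j\big)h_{\epsilon_A}$ for some $\epsilon_A\in\mathcal E^A$. (b) If $\epsilon_i=1$ then $s_{\alpha_i}(h_\epsilon H^A)\subset h_\epsilon H^A$. If $\epsilon_i=-1$ then $s_{\alpha_i}(h_\epsilon H^A)\subset h_{\epsilon'}H^A$ with $\epsilon'$ as in (a), and $h_{\epsilon'}$ factors as in (a). (c) For every $k$, every $h\in H_\epsilon:=h_\epsilon H$ and every $h'\in s_{\alpha_i}(H_\epsilon)$, the sign $\epsilon_k$ of $\chi_{\alpha_k}(h)$ equals the sign of $\chi_{s_{\alpha_i}\alpha_k}(h')$.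
   Context: $\mathfrak g$ is a real split semisimple Lie algebra of rank $l$, $\mathfrak h$ a split Cartan subalgebra, $\Pi=\{\alpha_1,\dots,\alpha_l\}$ simple roots, $h_{\alpha_j}$ coroots, $C_{i,j}=\alpha_i(h_{\alpha_j})$. $G_{\mathbb C}$ is the connected adjoint group of $\mathfrak g\otimes\mathbb C$, $H_{\mathbb C}$ its Cartan subgroup with Lie algebra $\mathfrak h\otimes\mathbb C$, $\tilde G=\{g\in G_{\mathbb C}:\mathrm{Ad}(g)\mathfrak g\subset\mathfrak g\}$, $H_{\mathbb R}=H_{\mathbb C}\cap\tilde G$, $H=\exp\mathfrak h$, and $\chi_\phi$ denotes the root character of $\phi$ ($\mathrm{Ad}(h)e_\phi=\chi_\phi(h)e_\phi$), real and nonzero on $H_{\mathbb R}$. Let $y_i\in\mathfrak h$ with $\alpha_j(y_i)=\pi\delta_{ij}$, $h_i=\exp(\sqrt{-1}y_i)$, $h_\epsilon=\prod_{i:\epsilon_i=-1}h_i$ for $\epsilon\in\{\pm1\}^l$. For $A\subset\Pi$: $\mathcal E^A=\{\epsilon\in\{\pm1\}^l:\epsilon_j=1\text{ whenever }\alpha_j\in A\}$, and $H^A=\exp(\mathfrak h^A)$ with $\mathfrak h^A$ the real span of $h_{\alpha_j}$, $\alpha_j\notin A$. The Weyl group acts on $H_{\mathbb R}$ by conjugation by normalizer representatives. *)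

theory Defs
  imports Complex_Main
begin

text \<open>Simple roots are indexed by 0..<l.  Since the root lattice is the character
  lattice of the Cartan subgroup H_C of the adjoint group, the map
  h |-> (chi_{alpha_0}(h),...,chi_{alpha_{l-1}}(h)) identifies H_C with (C^*)^l.
  An element of H_C is represented by its vector of simple-root character values
  (normalised to 1 outside 0..<l).\<close>

text \<open>Cartan matrix C i j = alpha_i(h_{alpha_j}) of a semisimple Lie algebra of rank l:
  integer entries, 2 on the diagonal, nonpositive off-diagonal, symmetrisable
  with positive definite symmetrisation (finite type).\<close>
definition cartan_matrix :: "nat \<Rightarrow> (nat \<Rightarrow> nat \<Rightarrow> int) \<Rightarrow> bool" where
  "cartan_matrix l C \<longleftrightarrow>
     (\<forall>i<l. C i i = 2) \<and>
     (\<forall>i<l. \<forall>j<l. i \<noteq> j \<longrightarrow> C i j \<le> 0) \<and>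
     (\<forall>i<l. \<forall>j<l. C i j = 0 \<longleftrightarrow> C j i = 0) \<and>
     (\<exists>d::nat \<Rightarrow> real. (\<forall>i<l. d i > 0) \<and>
        (\<forall>i<l. \<forall>j<l. of_int (C i j) * d j = of_int (C j i) * d i) \<and>
        (\<forall>x::nat \<Rightarrow> real. (\<exists>j<l. x j \<noteq> 0) \<longrightarrow>
            (\<Sum>i<l. \<Sum>j<l. x i * of_int (C i j) * d j * x j) > 0))"

definition torus :: "nat \<Rightarrow> (nat \<Rightarrow> complex) set" where
  "torus l = {h. (\<forall>j<l. h j \<noteq> 0) \<and> (\<forall>j\<ge>l. h j = 1)}"

definition tmult :: "(nat \<Rightarrow> complex) \<Rightarrow> (nat \<Rightarrow> complex) \<Rightarrow> (nat \<Rightarrow> complex)" where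
  "tmult h g = (\<lambda>k. h k * g k)"

definition tprod :: "nat set \<Rightarrow> (nat \<Rightarrow> nat \<Rightarrow> complex) \<Rightarrow> (nat \<Rightarrow> complex)" where
  "tprod S f = (\<lambda>k. \<Prod>j\<in>S. f j k)"

definition tcoset :: "(nat \<Rightarrow> complex) \<Rightarrow> (nat \<Rightarrow> complex) set \<Rightarrow> (nat \<Rightarrow> complex) set" where
  "tcoset h S = tmult h ` S"

text \<open>Roots as coefficient vectors w.r.t. the simple roots; root character chi_phi.\<close>
definition simple_root :: "nat \<Rightarrow> nat \<Rightarrow> int" where
  "simple_root i = (\<lambda>j. if j = i then 1 else 0)"

definition root_char :: "nat \<Rightarrow> (nat \<Rightarrow> int) \<Rightarrow> (nat \<Rightarrow> complex) \<Rightarrow> complex" where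
  "root_char l \<phi> h = (\<Prod>j<l. h j powi \<phi> j)"

text \<open>Simple reflection on roots: s_i(phi) = phi - phi(h_{alpha_i}) alpha_i.\<close>
definition root_refl :: "nat \<Rightarrow> (nat \<Rightarrow> nat \<Rightarrow> int) \<Rightarrow> nat \<Rightarrow> (nat \<Rightarrow> int) \<Rightarrow> (nat \<Rightarrow> int)" where
  "root_refl l C i \<phi> = (\<lambda>j. if j = i then \<phi> j - (\<Sum>m<l. \<phi> m * C m i) else \<phi> j)"

text \<open>Action of the simple Weyl reflection on H_C (conjugation by a normaliser
  representative): chi_{alpha_k}(s_i h) = chi_{s_i alpha_k}(h).\<close>
definition weyl_s :: "nat \<Rightarrow> (nat \<Rightarrow> nat \<Rightarrow> int) \<Rightarrow> nat \<Rightarrow> (nat \<Rightarrow> complex) \<Rightarrow> (nat \<Rightarrow> complex)" where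
  "weyl_s l C i h = (\<lambda>k. if k < l then root_char l (root_refl l C i (simple_root k)) h else 1)"

text \<open>alpha_k(x) for x = sum_j x_j h_{alpha_j} in h (or h tensor C).\<close>
definition alpha_val :: "nat \<Rightarrow> (nat \<Rightarrow> nat \<Rightarrow> int) \<Rightarrow> nat \<Rightarrow> (nat \<Rightarrow> 'a::comm_ring_1) \<Rightarrow> 'a" where
  "alpha_val l C k x = (\<Sum>j<l. x j * of_int (C k j))"

text \<open>Exponential map h tensor C -> H_C: chi_{alpha_k}(exp x) = e^{alpha_k(x)}.\<close>
definition texp :: "nat \<Rightarrow> (nat \<Rightarrow> nat \<Rightarrow> int) \<Rightarrow> (nat \<Rightarrow> complex) \<Rightarrow> (nat \<Rightarrow> complex)" where
  "texp l C z = (\<lambda>k. if k < l then exp (alpha_val l C k z) else 1)"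

definition y_vec :: "nat \<Rightarrow> (nat \<Rightarrow> nat \<Rightarrow> int) \<Rightarrow> nat \<Rightarrow> (nat \<Rightarrow> real)" where
  "y_vec l C i = (THE x. (\<forall>k<l. alpha_val l C k x = (if k = i then pi else 0)) \<and> (\<forall>j\<ge>l. x j = 0))"

definition h_gen :: "nat \<Rightarrow> (nat \<Rightarrow> nat \<Rightarrow> int) \<Rightarrow> nat \<Rightarrow> (nat \<Rightarrow> complex)" where
  "h_gen l C i = texp l C (\<lambda>j. \<i> * of_real (y_vec l C i j))"

definition h_eps :: "nat \<Rightarrow> (nat \<Rightarrow> nat \<Rightarrow> int) \<Rightarrow> (nat \<Rightarrow> real) \<Rightarrow> (nat \<Rightarrow> complex)" where
  "h_eps l C \<epsilon> = tprod {j. j < l \<and> \<epsilon> j = -1} (h_gen l C)"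

definition eps_set :: "nat \<Rightarrow> nat set \<Rightarrow> (nat \<Rightarrow> real) set" where
  "eps_set l A = {\<epsilon>. (\<forall>j<l. \<epsilon> j = 1 \<or> \<epsilon> j = -1) \<and> (\<forall>j\<in>A. \<epsilon> j = 1)}"

text \<open>H = exp(h) and H^A = exp(h^A), h^A = real span of h_{alpha_j}, alpha_j not in A.\<close>
definition H_split :: "nat \<Rightarrow> (nat \<Rightarrow> nat \<Rightarrow> int) \<Rightarrow> (nat \<Rightarrow> complex) set" where
  "H_split l C = (\<lambda>x. texp l C (\<lambda>j. complex_of_real (x j))) ` {x. \<forall>j\<ge>l. x j = 0}"

definition H_A :: "nat \<Rightarrow> (nat \<Rightarrow> nat \<Rightarrow> int) \<Rightarrow> nat set \<Rightarrow> (nat \<Rightarrow> complex) set" where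
  "H_A l C A = (\<lambda>x. texp l C (\<lambda>j. complex_of_real (x j))) ` {x. \<forall>j. (l \<le> j \<or> j \<in> A) \<longrightarrow> x j = 0}"

end

theory Submission imports Defs "Jordan_Normal_Form.Determinant"
begin

lemma cartan_inj:
  assumes "cartan_matrix l C" "\<forall>k<l. (\<Sum>j<l. w j * of_int (C k j)) = (0::real)"
  shows "\<forall>j<l. w j = 0"
proof (rule ccontr)
  assume "\<not> (\<forall>j<l. w j = 0)"
  then obtain j0 where j0: "j0 < l" "w j0 \<noteq> 0" by auto
  obtain d where d: "\<forall>i<l. d i > (0::real)"
    "\<forall>x::nat \<Rightarrow> real. (\<exists>j<l. x j \<noteq> 0) \<longrightarrow>
            (\<Sum>i<l. \<Sum>j<l. x i * of_int (C i j) * d j * x j) > 0"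
    using assms(1) unfolding cartan_matrix_def by blast
  define x where "x j = w j / d j" for j
  have "\<exists>j<l. x j \<noteq> 0"
    by (intro exI[of _ j0]) (use j0 d(1) in \<open>auto simp: x_def\<close>)
  with d(2) have pos: "(\<Sum>i<l. \<Sum>j<l. x i * of_int (C i j) * d j * x j) > 0" by blast
  have "(\<Sum>i<l. \<Sum>j<l. x i * of_int (C i j) * d j * x j) = (\<Sum>i<l. x i * (\<Sum>j<l. w j * of_int (C i j)))"
  proof (rule sum.cong[OF refl])
    fix i assume "i \<in> {..<l}"
    have "(\<Sum>j<l. x i * of_int (C i j) * d j * x j) = (\<Sum>j<l. x i * (w j * of_int (C i j)))"
    proof (rule sum.cong[OF refl])
      fix j assume "j \<in> {..<l}"
      then have "d j > 0" using d(1) by auto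
      then show "x i * of_int (C i j) * d j * x j = x i * (w j * of_int (C i j))"
        unfolding x_def by (simp add: field_simps)
    qed
    then show "(\<Sum>j<l. x i * of_int (C i j) * d j * x j) = x i * (\<Sum>j<l. w j * of_int (C i j))"
      by (simp add: sum_distrib_left)
  qed
  also have "\<dots> = 0" using assms(2) by simp
  finally show False using pos by simp
qed

lemma y_vec_spec:
  assumes "cartan_matrix l C" "i < l"
  shows "\<forall>k<l. alpha_val l C k (y_vec l C i) = (if k = i then pi else 0)"
proof -
  let ?P = "\<lambda>x. (\<forall>k<l. alpha_val l C k x = (if k = i then pi else 0)) \<and> (\<forall>j\<ge>l. x j = 0)"
  define M :: "real mat" where "M = mat l l (\<lambda>(k,j). of_int (C k j))"
  have M: "M \<in> carrier_mat l l" unfolding M_def by simp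
  have Mv: "(M *\<^sub>v v) $ k = (\<Sum>j<l. v $ j * of_int (C k j))" if "k < l" "v \<in> carrier_vec l" for k v
    using that unfolding M_def by (auto simp: scalar_prod_def lessThan_atLeast0 mult.commute intro!: sum.cong)
  have "det M \<noteq> 0"
  proof
    assume "det M = 0"
    then obtain v where v: "v \<in> carrier_vec l" "v \<noteq> 0\<^sub>v l" "M *\<^sub>v v = 0\<^sub>v l"
      using det_0_iff_vec_prod_zero_field[OF M] by blast
    have "\<forall>k<l. (\<Sum>j<l. v $ j * of_int (C k j)) = 0"
    proof (intro allI impI)
      fix k assume "k < l"
      have "(M *\<^sub>v v) $ k = 0" using v(3) \<open>k < l\<close> by simp
      then show "(\<Sum>j<l. v $ j * of_int (C k j)) = 0" using Mv[OF \<open>k<l\<close> v(1)] by simp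
    qed
    from cartan_inj[OF assms(1) this] have "v = 0\<^sub>v l" using v(1) by (intro eq_vecI) auto
    with v(2) show False by simp
  qed
  from det_non_zero_imp_unit[OF M this, of "()"]
  obtain B where B: "B \<in> carrier_mat l l" "M * B = 1\<^sub>m l"
    unfolding Units_def ring_mat_def by auto
  define v where "v = B *\<^sub>v (pi \<cdot>\<^sub>v unit_vec l i)"
  have vc: "v \<in> carrier_vec l" unfolding v_def using B by simp
  have Mv2: "M *\<^sub>v v = pi \<cdot>\<^sub>v unit_vec l i" unfolding v_def
    using B M by (simp add: assoc_mult_mat_vec[symmetric, of M l l B l])
  define x where "x j = (if j < l then v $ j else 0)" for j
  have Px: "?P x"
  proof (intro conjI allI impI)
    fix k assume k: "k < l"
    have "alpha_val l C k x = (\<Sum>j<l. v $ j * of_int (C k j))"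
      unfolding alpha_val_def x_def by (auto intro!: sum.cong)
    also have "\<dots> = (M *\<^sub>v v) $ k" using Mv[OF k vc] by simp
    also have "\<dots> = (if k = i then pi else 0)" unfolding Mv2 using k assms(2) by simp
    finally show "alpha_val l C k x = (if k = i then pi else 0)" .
  next
    fix j assume "l \<le> j" then show "x j = 0" unfolding x_def by simp
  qed
  have uniq: "z = x" if "?P z" for z
  proof -
    have "\<forall>k<l. (\<Sum>j<l. (z j - x j) * of_int (C k j)) = 0"
      using that Px unfolding alpha_val_def by (simp add: left_diff_distrib sum_subtractf)
    from cartan_inj[OF assms(1) this] have zx: "\<forall>j<l. z j - x j = 0" .
    show ?thesis
    proof
      fix j show "z j = x j"
      proof (cases "j < l")
        case True then show ?thesis using zx by simp
      next
        case False then show ?thesis using that Px by simp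
      qed
    qed
  qed
  have "?P (y_vec l C i)" unfolding y_vec_def
    by (rule theI[of ?P x, OF Px uniq])
  then show ?thesis by blast
qed


definition sv :: "nat \<Rightarrow> (nat \<Rightarrow> real) \<Rightarrow> (nat \<Rightarrow> complex)" where
  "sv l f = (\<lambda>k. if k < l then complex_of_real (f k) else 1)"

lemma cartan_diag: "cartan_matrix l C \<Longrightarrow> i < l \<Longrightarrow> C i i = 2"
  unfolding cartan_matrix_def by blast

lemma h_gen_eq:
  assumes "cartan_matrix l C" "i < l"
  shows "h_gen l C i = (\<lambda>k. if k = i then -1 else 1)"
proof
  fix k
  show "h_gen l C i k = (if k = i then -1 else 1)"
  proof (cases "k < l")
    case True
    have "alpha_val l C k (\<lambda>j. \<i> * complex_of_real (y_vec l C i j))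
        = \<i> * complex_of_real (alpha_val l C k (y_vec l C i))"
      unfolding alpha_val_def by (simp add: sum_distrib_left mult.assoc)
    also have "\<dots> = (if k = i then \<i> * pi else 0)" using y_vec_spec[OF assms] True by simp
    finally show ?thesis using True unfolding h_gen_def texp_def
      by (simp add: exp_pi_i' mult.commute)
  next
    case False
    then show ?thesis using assms(2) unfolding h_gen_def texp_def by auto
  qed
qed

lemma tprod_hgen:
  assumes "cartan_matrix l C" "S \<subseteq> {..<l}"
  shows "tprod S (h_gen l C) = (\<lambda>k. if k \<in> S then -1 else 1)"
proof
  fix k
  have fin: "finite S" using assms(2) finite_subset by blast
  have "(\<Prod>j\<in>S. h_gen l C j k) = (\<Prod>j\<in>S. if k = j then -1 else 1)"
    using h_gen_eq[OF assms(1)] assms(2) by (intro prod.cong) auto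
  also have "\<dots> = (if k \<in> S then -1 else 1)" by (fact prod.delta'[OF fin, of k "\<lambda>_. -1::complex"])
  finally show "tprod S (h_gen l C) k = (if k \<in> S then -1 else 1)" unfolding tprod_def .
qed

lemma h_eps_eq:
  assumes "cartan_matrix l C"
  shows "h_eps l C e = (\<lambda>k. if k < l \<and> e k = -1 then -1 else 1)"
  unfolding h_eps_def by (subst tprod_hgen[OF assms]) auto

lemma h_eps_sv:
  assumes "cartan_matrix l C" "\<forall>k<l. e k = 1 \<or> e k = -1"
  shows "h_eps l C e = sv l e"
  unfolding h_eps_eq[OF assms(1)] sv_def using assms(2) by (auto intro!: ext)

lemma root_char_simple:
  assumes "k < l"
  shows "root_char l (simple_root k) h = h k"
proof -
  have "root_char l (simple_root k) h = (\<Prod>j<l. if k = j then h j else 1)"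
    unfolding root_char_def simple_root_def by (intro prod.cong) auto
  also have "\<dots> = h k" using assms by simp
  finally show ?thesis .
qed

lemma rc_refl:
  assumes "cartan_matrix l C" "k < l" "i < l" "\<forall>j<l. h j \<noteq> 0"
  shows "root_char l (root_refl l C i (simple_root k)) h = h k * h i powi (- C k i)"
proof -
  have "(\<Sum>m<l. simple_root k m * C m i) = (\<Sum>m<l. if k = m then C k i else 0)"
    by (intro sum.cong) (auto simp: simple_root_def)
  also have "\<dots> = C k i" using assms(2) by simp
  finally have s: "(\<Sum>m<l. simple_root k m * C m i) = C k i" .
  have "root_char l (root_refl l C i (simple_root k)) h
      = (\<Prod>j<l. h j powi (if k = j then 1 else 0) * h j powi (if i = j then - C k i else 0))"
    unfolding root_char_def
  proof (intro prod.cong refl)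
    fix j assume "j \<in> {..<l}"
    then have "h j \<noteq> 0" using assms(4) by auto
    then show "h j powi root_refl l C i (simple_root k) j
       = h j powi (if k = j then 1 else 0) * h j powi (if i = j then - C k i else 0)"
      unfolding root_refl_def s by (auto simp: simple_root_def power_int_add[symmetric])
  qed
  also have "\<dots> = (\<Prod>j<l. if k = j then h j else 1) * (\<Prod>j<l. if i = j then h j powi (- C k i) else 1)"
    unfolding prod.distrib by (intro arg_cong2[where f=times] prod.cong) auto
  also have "\<dots> = h k * h i powi (- C k i)" using assms(2,3) by simp
  finally show ?thesis .
qed

lemma weyl_s_eq:
  assumes "cartan_matrix l C" "i < l" "\<forall>j<l. h j \<noteq> 0"
  shows "weyl_s l C i h = (\<lambda>k. if k < l then h k * h i powi (- C k i) else 1)"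
  unfolding weyl_s_def using rc_refl[OF assms(1) _ assms(2,3)] by auto

lemma weyl_sv:
  assumes "cartan_matrix l C" "i < l" "\<forall>j<l. f j \<noteq> 0"
  shows "weyl_s l C i (sv l f) = sv l (\<lambda>k. f k * f i powi (- C k i))"
proof -
  have "\<forall>j<l. sv l f j \<noteq> 0" using assms(3) by (simp add: sv_def)
  from weyl_s_eq[OF assms(1,2) this] show ?thesis
    using assms(2) by (auto simp: sv_def intro!: ext)
qed

lemma texp_real: "texp l C (\<lambda>j. complex_of_real (x j)) = sv l (\<lambda>k. exp (alpha_val l C k x))"
proof -
  have "(\<Sum>j<l. complex_of_real (x j) * complex_of_int (C k j)) = of_real (\<Sum>j<l. x j * of_int (C k j))" for k
    by simp
  then show ?thesis
    unfolding texp_def sv_def alpha_val_def by (auto intro!: ext simp: exp_of_real[symmetric])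
qed

lemma tmult_sv: "tmult (sv l f) (sv l g) = sv l (\<lambda>k. f k * g k)"
  unfolding tmult_def sv_def by (auto intro!: ext)

lemma sv_eqI: "(\<And>k. k < l \<Longrightarrow> f k = g k) \<Longrightarrow> sv l f = sv l g"
  unfolding sv_def by (auto intro!: ext)

lemma minus_one_powi: "(-1::real) powi (- n) = (if odd n then -1 else 1)"
  unfolding power_int_minus_one_minus
  using power_int_minus_left_odd[of n "1::real"] power_int_minus_left_even[of n "1::real"] by auto

lemma real_id:
  assumes "(a::real) \<noteq> 0"
  shows "b * a powi (- c) * (a * a powi (- 2)) powi (- c) = b"
proof -
  have "a * a powi (- 2) = a powi 1 * a powi (- 2)" by simp
  also have "\<dots> = a powi (1 + - 2)" using power_int_add assms by metis
  finally have "a * a powi (- 2) = a powi (-1)" by simp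
  then have "(a * a powi (- 2)) powi (- c) = a powi c"
    using power_int_mult[of a "-1" "-c"] by simp
  then show ?thesis using assms by (simp add: mult.assoc power_int_add[symmetric])
qed


lemma coset_elem:
  assumes "cartan_matrix l C" "\<forall>k<l. e k = 1 \<or> e k = -1"
  shows "tmult (h_eps l C e) (texp l C (\<lambda>j. complex_of_real (x j)))
       = sv l (\<lambda>k. e k * exp (alpha_val l C k x))"
  unfolding h_eps_sv[OF assms] texp_real tmult_sv ..

lemma av_shift:
  assumes "i < l"
  shows "alpha_val l C k (\<lambda>j. x j - (if j = i then alpha_val l C i x else 0))
       = alpha_val l C k x - alpha_val l C i x * of_int (C k i)"
proof -
  let ?b = "alpha_val l C i x"
  have "alpha_val l C k (\<lambda>j. x j - (if j = i then ?b else 0))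
      = (\<Sum>j<l. x j * of_int (C k j) - (if j = i then ?b * of_int (C k j) else 0))"
    unfolding alpha_val_def by (intro sum.cong) (auto simp: left_diff_distrib)
  also have "\<dots> = (\<Sum>j<l. x j * of_int (C k j)) - (\<Sum>j<l. if j = i then ?b * of_int (C k j) else 0)"
    by (simp only: sum_subtractf)
  also have "\<dots> = alpha_val l C k x - ?b * of_int (C k i)"
    using assms unfolding alpha_val_def by simp
  finally show ?thesis .
qed

lemma weyl_coset:
  assumes "cartan_matrix l C" "i < l" "\<forall>k<l. e k = 1 \<or> e k = -1"
  shows "weyl_s l C i (sv l (\<lambda>k. e k * exp (alpha_val l C k x)))
     = sv l (\<lambda>k. (e k * e i powi (- C k i)) *
           exp (alpha_val l C k (\<lambda>j. x j - (if j = i then alpha_val l C i x else 0))))"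
proof -
  have nz: "\<forall>k<l. e k * exp (alpha_val l C k x) \<noteq> 0" using assms(3) by auto
  show ?thesis
    unfolding weyl_sv[OF assms(1,2) nz]
  proof (rule sv_eqI)
    fix k assume "k < l"
    let ?a = "alpha_val l C k x" and ?b = "alpha_val l C i x" and ?c = "C k i"
    have 1: "(e i * exp ?b) powi (- ?c) = e i powi (- ?c) * exp (of_int (- ?c) * ?b)"
      by (simp add: power_int_mult_distrib exp_power_int)
    have 2: "exp (?a - ?b * of_int ?c) = exp ?a * exp (of_int (- ?c) * ?b)"
      by (simp add: exp_add[symmetric] algebra_simps)
    show "e k * exp ?a * (e i * exp ?b) powi (- ?c)
        = e k * e i powi (- ?c) * exp (alpha_val l C k (\<lambda>j. x j - (if j = i then ?b else 0)))"
      unfolding av_shift[OF assms(2)] 1 2 by (simp add: algebra_simps)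
  qed
qed

theorem proposition2p2p4:
  fixes l :: nat and C :: "nat \<Rightarrow> nat \<Rightarrow> int" and A :: "nat set"
    and i :: nat and \<epsilon> :: "nat \<Rightarrow> real"
  assumes "cartan_matrix l C" and "A \<subseteq> {..<l}" and "i < l" and "i \<notin> A"
    and "\<epsilon> \<in> eps_set l A"
  defines "\<epsilon>' \<equiv> (\<lambda>j. \<epsilon> j * \<epsilon> i powi (- C j i))"
  shows
    "(\<epsilon> i = 1 \<longrightarrow> weyl_s l C i (h_eps l C \<epsilon>) = h_eps l C \<epsilon>) \<and>
     (\<epsilon> i = -1 \<longrightarrow> weyl_s l C i (h_eps l C \<epsilon>) = h_eps l C \<epsilon>' \<and>
        (\<exists>\<epsilon>A\<in>eps_set l A. h_eps l C \<epsilon>' =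
            tmult (tprod {j\<in>A. odd (C j i)} (h_gen l C)) (h_eps l C \<epsilon>A))) \<and>
     (\<epsilon> i = 1 \<longrightarrow> weyl_s l C i ` tcoset (h_eps l C \<epsilon>) (H_A l C A)
                     \<subseteq> tcoset (h_eps l C \<epsilon>) (H_A l C A)) \<and>
     (\<epsilon> i = -1 \<longrightarrow> weyl_s l C i ` tcoset (h_eps l C \<epsilon>) (H_A l C A)
                     \<subseteq> tcoset (h_eps l C \<epsilon>') (H_A l C A)) \<and>
     (\<forall>k<l. \<forall>h\<in>tcoset (h_eps l C \<epsilon>) (H_split l C).
        \<forall>h'\<in>weyl_s l C i ` tcoset (h_eps l C \<epsilon>) (H_split l C).
          root_char l (simple_root k) h \<in> \<real> \<and>
          root_char l (root_refl l C i (simple_root k)) h' \<in> \<real> \<and>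
          sgn (Re (root_char l (simple_root k) h)) = \<epsilon> k \<and>
          sgn (Re (root_char l (root_refl l C i (simple_root k)) h')) = \<epsilon> k)"
proof -
  note Cm = assms(1)
  have epm: "\<forall>k<l. \<epsilon> k = 1 \<or> \<epsilon> k = -1" and epA: "\<forall>j\<in>A. \<epsilon> j = 1"
    using assms(5) unfolding eps_set_def by auto
  have ei: "\<epsilon> i = 1 \<or> \<epsilon> i = -1" using epm assms(3) by auto
  have mo: "(-1::real) powi (- C k i) = (if odd (C k i) then -1 else 1)" for k
    using minus_one_powi by simp
  have epm': "\<forall>k<l. \<epsilon>' k = 1 \<or> \<epsilon>' k = -1"
  proof (intro allI impI)
    fix k assume "k < l"
    then have "\<epsilon> k = 1 \<or> \<epsilon> k = -1" using epm by auto
    then show "\<epsilon>' k = 1 \<or> \<epsilon>' k = -1" using ei unfolding \<epsilon>'_def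
      by (cases "odd (C k i)") (auto simp: mo)
  qed
  have nz: "\<forall>k<l. \<epsilon> k \<noteq> 0" using epm by force
  have W: "weyl_s l C i (h_eps l C \<epsilon>) = h_eps l C \<epsilon>'"
  proof -
    have "weyl_s l C i (h_eps l C \<epsilon>) = sv l (\<lambda>k. \<epsilon> k * \<epsilon> i powi (- C k i))"
      unfolding h_eps_sv[OF Cm epm] weyl_sv[OF Cm assms(3) nz] ..
    also have "\<dots> = h_eps l C \<epsilon>'"
      by (simp only: h_eps_sv[OF Cm epm']) (simp add: \<epsilon>'_def)
    finally show ?thesis .
  qed
  have E1: "h_eps l C \<epsilon>' = h_eps l C \<epsilon>" if "\<epsilon> i = 1"
    unfolding h_eps_sv[OF Cm epm] h_eps_sv[OF Cm epm'] using that
    by (intro sv_eqI) (simp add: \<epsilon>'_def)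
  have F: "\<exists>\<epsilon>A\<in>eps_set l A. h_eps l C \<epsilon>' =
            tmult (tprod {j\<in>A. odd (C j i)} (h_gen l C)) (h_eps l C \<epsilon>A)" if "\<epsilon> i = -1"
  proof (intro bexI)
    define eA where "eA j = (if j \<in> A then 1 else \<epsilon>' j)" for j
    show "eA \<in> eps_set l A" unfolding eps_set_def eA_def using epm' by auto
    have sub: "{j\<in>A. odd (C j i)} \<subseteq> {..<l}" using assms(2) by auto
    show "h_eps l C \<epsilon>' = tmult (tprod {j\<in>A. odd (C j i)} (h_gen l C)) (h_eps l C eA)"
      unfolding h_eps_eq[OF Cm] tprod_hgen[OF Cm sub] tmult_def
    proof
      fix k
      show "(if k < l \<and> \<epsilon>' k = -1 then -1 else (1::complex)) =
         (if k \<in> {j \<in> A. odd (C j i)} then -1 else 1) * (if k < l \<and> eA k = -1 then -1 else 1)"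
      proof (cases "k \<in> A")
        case True
        then have "\<epsilon> k = 1" "k < l" using epA assms(2) by auto
        then show ?thesis using True that unfolding eA_def \<epsilon>'_def mo by auto
      next
        case False
        then show ?thesis unfolding eA_def by auto
      qed
    qed
  qed
  have B: "weyl_s l C i ` tcoset (h_eps l C \<epsilon>) (H_A l C A) \<subseteq> tcoset (h_eps l C \<epsilon>') (H_A l C A)"
  proof
    fix g assume "g \<in> weyl_s l C i ` tcoset (h_eps l C \<epsilon>) (H_A l C A)"
    then obtain x where x: "\<forall>j. (l \<le> j \<or> j \<in> A) \<longrightarrow> x j = 0"
      and g: "g = weyl_s l C i (tmult (h_eps l C \<epsilon>) (texp l C (\<lambda>j. complex_of_real (x j))))"
      unfolding tcoset_def H_A_def by auto
    define x' where "x' = (\<lambda>j. x j - (if j = i then alpha_val l C i x else 0))"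
    have x': "\<forall>j. (l \<le> j \<or> j \<in> A) \<longrightarrow> x' j = 0"
      using x assms(3,4) unfolding x'_def by auto
    have "g = tmult (h_eps l C \<epsilon>') (texp l C (\<lambda>j. complex_of_real (x' j)))"
      unfolding g coset_elem[OF Cm epm] coset_elem[OF Cm epm'] weyl_coset[OF Cm assms(3) epm]
      unfolding x'_def \<epsilon>'_def ..
    then show "g \<in> tcoset (h_eps l C \<epsilon>') (H_A l C A)"
      unfolding tcoset_def H_A_def using x' by blast
  qed
  have Cc: "\<forall>k<l. \<forall>h\<in>tcoset (h_eps l C \<epsilon>) (H_split l C).
        \<forall>h'\<in>weyl_s l C i ` tcoset (h_eps l C \<epsilon>) (H_split l C).
          root_char l (simple_root k) h \<in> \<real> \<and>
          root_char l (root_refl l C i (simple_root k)) h' \<in> \<real> \<and>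
          sgn (Re (root_char l (simple_root k) h)) = \<epsilon> k \<and>
          sgn (Re (root_char l (root_refl l C i (simple_root k)) h')) = \<epsilon> k"
  proof (intro allI impI ballI)
    fix k h h' assume k: "k < l" and h: "h \<in> tcoset (h_eps l C \<epsilon>) (H_split l C)"
      and h': "h' \<in> weyl_s l C i ` tcoset (h_eps l C \<epsilon>) (H_split l C)"
    from h obtain x where "h = tmult (h_eps l C \<epsilon>) (texp l C (\<lambda>j. complex_of_real (x j)))"
      unfolding tcoset_def H_split_def by auto
    then have hx: "h = sv l (\<lambda>k. \<epsilon> k * exp (alpha_val l C k x))"
      using coset_elem[OF Cm epm] by simp
    from h' obtain z where "h' = weyl_s l C i (tmult (h_eps l C \<epsilon>) (texp l C (\<lambda>j. complex_of_real (z j))))"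
      unfolding tcoset_def H_split_def by auto
    then have hz: "h' = weyl_s l C i (sv l (\<lambda>k. \<epsilon> k * exp (alpha_val l C k z)))"
      using coset_elem[OF Cm epm] by simp
    define g where "g k = \<epsilon> k * exp (alpha_val l C k z)" for k
    have gnz: "\<forall>k<l. g k \<noteq> 0" using nz unfolding g_def by auto
    define G where "G k = g k * g i powi (- C k i)" for k
    have hG: "h' = sv l G" unfolding hz G_def
      using weyl_sv[OF Cm assms(3) gnz] unfolding g_def by simp
    have Gnz: "\<forall>j<l. sv l G j \<noteq> 0" using gnz assms(3) unfolding G_def sv_def by auto
    have Gi: "G i = g i * g i powi (- 2)" unfolding G_def using cartan_diag[OF Cm assms(3)] by simp
    have r2: "root_char l (root_refl l C i (simple_root k)) h' = complex_of_real (g k)"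
    proof -
      have "G k * G i powi (- C k i) = g k"
        unfolding Gi unfolding G_def using real_id[OF gnz[rule_format, OF assms(3)]] by simp
      moreover have "root_char l (root_refl l C i (simple_root k)) h' = complex_of_real (G k * G i powi (- C k i))"
        unfolding hG rc_refl[OF Cm k assms(3) Gnz] using k assms(3) by (simp add: sv_def)
      ultimately show ?thesis by simp
    qed
    have r1: "root_char l (simple_root k) h = complex_of_real (\<epsilon> k * exp (alpha_val l C k x))"
      unfolding root_char_simple[OF k] hx sv_def using k by simp
    have sg: "sgn (\<epsilon> k * exp t) = \<epsilon> k" for t
      using epm k by (auto simp: sgn_mult)
    show "root_char l (simple_root k) h \<in> \<real> \<and>
          root_char l (root_refl l C i (simple_root k)) h' \<in> \<real> \<and>
          sgn (Re (root_char l (simple_root k) h)) = \<epsilon> k \<and>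
          sgn (Re (root_char l (root_refl l C i (simple_root k)) h')) = \<epsilon> k"
      unfolding r1 r2 g_def using sg by simp
  qed
  show ?thesis
  proof (intro conjI impI)
    assume "\<epsilon> i = 1"
    then show "weyl_s l C i (h_eps l C \<epsilon>) = h_eps l C \<epsilon>" using W E1 by simp
  next
    assume "\<epsilon> i = -1"
    then show "weyl_s l C i (h_eps l C \<epsilon>) = h_eps l C \<epsilon>'" using W by simp
  next
    assume "\<epsilon> i = -1"
    then show "\<exists>\<epsilon>A\<in>eps_set l A. h_eps l C \<epsilon>' =
            tmult (tprod {j\<in>A. odd (C j i)} (h_gen l C)) (h_eps l C \<epsilon>A)" by (rule F)
  next
    assume "\<epsilon> i = 1"
    then show "weyl_s l C i ` tcoset (h_eps l C \<epsilon>) (H_A l C A)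
                     \<subseteq> tcoset (h_eps l C \<epsilon>) (H_A l C A)" using B E1 by simp
  next
    assume "\<epsilon> i = -1"
    then show "weyl_s l C i ` tcoset (h_eps l C \<epsilon>) (H_A l C A)
                     \<subseteq> tcoset (h_eps l C \<epsilon>') (H_A l C A)" using B by simp
  qed (rule Cc)
qed

end
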